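(* Let $A$ be a set and $n\in\mathbb{N}$. The following are equivalent: (a) For every centraliser clone $F$ on $A$ we have $F=F^{(n)**}$. (b) For every centraliser clone $F$ we have $F^{(n)*}=F^*$. (c) For every centraliser clone $F$ we have $F^{(n)*(n)*}=F$. (d) For every centraliser clone $F$ there is some $G\subseteq\bigcup_{\ell\leq n}\mathrm{Op}^{(\ell)}(A)$ with $F=G^*$. (e) For every centraliser clone $F$ there is some $G\subseteq\mathrm{Op}^{(n)}(A)$ with $F=G^*$. (f) For every set $F\subseteq\mathrm{Op}(A)$ we have $F^{*(n)*}=F^{**}$. (g) For every centraliser clone $F$ we have $F^{*(n)*}=F$.
   Context: $\mathrm{Op}(A)$ is the set of all finitary operations $A^m\to A$ with $m\geq 1$ (nullary operations excluded), and $\mathrm{Op}^{(\ell)}(A)$ the set of $\ell$-ary ones. For $F\subseteq\mathrm{Op}(A)$, $F^{(n)}$ denotes the set of $n$-ary members of $F$. An $m$-ary $g$ commutes with an $n$-ary $h$ if $g\bigl((h((x_{ij})_{j}))_{i}\bigr)=h\bigl((g((x_{ij})_{i}))_{j}\bigr)$ for all $(x_{ij})\in A^{m\times n}$; $F^*$ (the centraliser of $F$) is the set of all $g\in\mathrm{Op}(A)$ commuting with every member of $F$. Superscript operators are applied from left to right, e.g. $F^{(n)*(n)*}=((((F^{(n)})^* )^{(n)})^* )$ and $F^{*(n)*}=((F^* )^{(n)})^*$. A centraliser clone is a set $F\subseteq\mathrm{Op}(A)$ with $F^{**}=F$. *)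

theory Defs
  imports "HOL-Library.FuncSet"
begin

text \<open>An operation is a pair (m, f) of its arity m and an extensional function f
  on m-tuples over A (tuples are extensional functions on {..<m}).\<close>

type_synonym 'a operation = "nat \<times> ((nat \<Rightarrow> 'a) \<Rightarrow> 'a)"

definition Ops :: "'a set \<Rightarrow> 'a operation set" where
  "Ops A = {(m, f). 1 \<le> m \<and> f \<in> (PiE {..<m} (\<lambda>_. A)) \<rightarrow>\<^sub>E A}"

definition Ops_ar :: "'a set \<Rightarrow> nat \<Rightarrow> 'a operation set" where
  "Ops_ar A l = {g \<in> Ops A. fst g = l}"

definition arity_part :: "'a operation set \<Rightarrow> nat \<Rightarrow> 'a operation set" where
  "arity_part F n = {g \<in> F. fst g = n}"

definition commutes :: "'a set \<Rightarrow> 'a operation \<Rightarrow> 'a operation \<Rightarrow> bool" where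
  "commutes A g h = (case g of (m, g') \<Rightarrow> case h of (n, h') \<Rightarrow>
     (\<forall>x :: nat \<Rightarrow> nat \<Rightarrow> 'a. (\<forall>i<m. \<forall>j<n. x i j \<in> A) \<longrightarrow>
        g' (\<lambda>i\<in>{..<m}. h' (\<lambda>j\<in>{..<n}. x i j))
      = h' (\<lambda>j\<in>{..<n}. g' (\<lambda>i\<in>{..<m}. x i j))))"

definition centraliser :: "'a set \<Rightarrow> 'a operation set \<Rightarrow> 'a operation set" where
  "centraliser A F = {g \<in> Ops A. \<forall>h\<in>F. commutes A g h}"

definition centraliser_clone :: "'a set \<Rightarrow> 'a operation set \<Rightarrow> bool" where
  "centraliser_clone A F \<longleftrightarrow> F \<subseteq> Ops A \<and> centraliser A (centraliser A F) = F"

end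

theory Submission
  imports Defs
begin


lemma commutes_sym: "commutes A g h = commutes A h g"
proof -
  have *: "commutes A g h \<Longrightarrow> commutes A h g" for g h
  proof -
    assume H: "commutes A g h"
    obtain m g' where g: "g = (m, g')" by (cases g)
    obtain k h' where h: "h = (k, h')" by (cases h)
    show ?thesis unfolding commutes_def g h
    proof (simp, intro allI impI)
      fix x :: "nat \<Rightarrow> nat \<Rightarrow> 'a"
      assume x: "\<forall>i<k. \<forall>j<m. x i j \<in> A"
      have "\<forall>i<m. \<forall>j<k. (\<lambda>i j. x j i) i j \<in> A" using x by auto
      with H show "h' (\<lambda>i\<in>{..<k}. g' (\<lambda>j\<in>{..<m}. x i j)) = g' (\<lambda>j\<in>{..<m}. h' (\<lambda>i\<in>{..<k}. x i j))"
        unfolding commutes_def g h by simp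
    qed
  qed
  show ?thesis using *[of g h] *[of h g] by blast
qed

lemma centraliser_anti: "X \<subseteq> Y \<Longrightarrow> centraliser A Y \<subseteq> centraliser A X"
  unfolding centraliser_def by blast

lemma centraliser_Ops: "centraliser A X \<subseteq> Ops A"
  unfolding centraliser_def by blast

lemma centraliser_ext: "X \<subseteq> Ops A \<Longrightarrow> X \<subseteq> centraliser A (centraliser A X)"
  unfolding centraliser_def using commutes_sym by blast

lemma centraliser3: "X \<subseteq> Ops A \<Longrightarrow> centraliser A (centraliser A (centraliser A X)) = centraliser A X"
proof -
  assume X: "X \<subseteq> Ops A"
  have 1: "centraliser A X \<subseteq> centraliser A (centraliser A (centraliser A X))"
    by (rule centraliser_ext[OF centraliser_Ops])
  have 2: "centraliser A (centraliser A (centraliser A X)) \<subseteq> centraliser A X"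
    by (rule centraliser_anti[OF centraliser_ext[OF X]])
  from 1 2 show ?thesis by (rule subset_antisym[rotated])
qed

lemma centraliser_clone_C: "X \<subseteq> Ops A \<Longrightarrow> centraliser_clone A (centraliser A X)"
  unfolding centraliser_clone_def using centraliser3 centraliser_Ops by blast

lemma arity_part_sub: "arity_part F n \<subseteq> F"
  unfolding arity_part_def by blast

definition pad :: "'a set \<Rightarrow> nat \<Rightarrow> 'a operation \<Rightarrow> 'a operation" where
  "pad A n g = (n, \<lambda>x\<in>PiE {..<n} (\<lambda>_. A). snd g (restrict x {..<fst g}))"

lemma pad_Ops:
  assumes "g \<in> Ops A" "fst g \<le> n"
  shows "pad A n g \<in> Ops A" "fst (pad A n g) = n"
proof -
  obtain l g' where g: "g = (l, g')" by (cases g)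
  show "fst (pad A n g) = n" unfolding pad_def by simp
  have g': "g' \<in> PiE {..<l} (\<lambda>_. A) \<rightarrow>\<^sub>E A" using assms g by (auto simp: Ops_def)
  have gx: "g' (restrict x {..<l}) \<in> A" if "x \<in> PiE {..<n} (\<lambda>_. A)" for x
  proof -
    have "restrict x {..<l} \<in> PiE {..<l} (\<lambda>_. A)" using that assms(2) g by (auto simp: PiE_iff)
    then show ?thesis by (rule PiE_mem[OF g'])
  qed
  have "(\<lambda>x\<in>PiE {..<n} (\<lambda>_. A). g' (restrict x {..<l})) \<in> PiE {..<n} (\<lambda>_. A) \<rightarrow>\<^sub>E A"
    unfolding restrict_PiE by (rule Pi_I, rule gx)
  moreover have "1 \<le> n" using assms g by (auto simp: Ops_def)
  ultimately show "pad A n g \<in> Ops A" using g unfolding pad_def Ops_def by simp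
qed

lemma pad_commutes:
  assumes "g \<in> Ops A" "fst g \<le> n" "h \<in> Ops A"
  shows "commutes A (pad A n g) h \<longleftrightarrow> commutes A g h"
proof -
  obtain l g' where g: "g = (l, g')" by (cases g)
  obtain m h' where h: "h = (m, h')" by (cases h)
  have l: "1 \<le> l" "l \<le> n" and g': "g' \<in> PiE {..<l} (\<lambda>_. A) \<rightarrow>\<^sub>E A" using assms g by (auto simp: Ops_def)
  have m: "1 \<le> m" and h': "h' \<in> PiE {..<m} (\<lambda>_. A) \<rightarrow>\<^sub>E A" using assms h by (auto simp: Ops_def)
  define p where "p = (\<lambda>x\<in>PiE {..<n} (\<lambda>_. A). g' (restrict x {..<l}))"
  have pg: "pad A n g = (n, p)" unfolding pad_def p_def g by simp
  have key: "p (\<lambda>i\<in>{..<n}. h' (\<lambda>j\<in>{..<m}. x i j)) = g' (\<lambda>i\<in>{..<l}. h' (\<lambda>j\<in>{..<m}. x i j))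
     \<and> h' (\<lambda>j\<in>{..<m}. p (\<lambda>i\<in>{..<n}. x i j)) = h' (\<lambda>j\<in>{..<m}. g' (\<lambda>i\<in>{..<l}. x i j))"
    if x: "\<forall>i<n. \<forall>j<m. x i j \<in> A" for x
  proof
    have "(\<lambda>i\<in>{..<n}. h' (\<lambda>j\<in>{..<m}. x i j)) \<in> PiE {..<n} (\<lambda>_. A)"
      using h' x by (auto simp: PiE_iff)
    moreover have "{..<n} \<inter> {..<l} = {..<l}" using l by auto
    ultimately show "p (\<lambda>i\<in>{..<n}. h' (\<lambda>j\<in>{..<m}. x i j)) = g' (\<lambda>i\<in>{..<l}. h' (\<lambda>j\<in>{..<m}. x i j))"
      unfolding p_def by simp
  next
    have "(\<lambda>j\<in>{..<m}. p (\<lambda>i\<in>{..<n}. x i j)) = (\<lambda>j\<in>{..<m}. g' (\<lambda>i\<in>{..<l}. x i j))"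
    proof (rule restrict_ext)
      fix j assume j: "j \<in> {..<m}"
      have "(\<lambda>i\<in>{..<n}. x i j) \<in> PiE {..<n} (\<lambda>_. A)" using x j by auto
      moreover have "{..<n} \<inter> {..<l} = {..<l}" using l by auto
      ultimately show "p (\<lambda>i\<in>{..<n}. x i j) = g' (\<lambda>i\<in>{..<l}. x i j)"
        unfolding p_def by simp
    qed
    then show "h' (\<lambda>j\<in>{..<m}. p (\<lambda>i\<in>{..<n}. x i j)) = h' (\<lambda>j\<in>{..<m}. g' (\<lambda>i\<in>{..<l}. x i j))"
      by simp
  qed
  show ?thesis
  proof
    assume H: "commutes A (pad A n g) h"
    show "commutes A g h"
    proof (cases "A = {}")
      case True
      have nx: "\<not>(\<forall>i<l. \<forall>j<m. x i j \<in> A)" for x :: "nat \<Rightarrow> nat \<Rightarrow> 'a"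
      proof -
        have "0 < l" "0 < m" using l m by auto
        then show ?thesis using True by blast
      qed
      show ?thesis unfolding commutes_def g h prod.case using nx by meson
    next
      case False
      then obtain a where a: "a \<in> A" by blast
      show ?thesis unfolding commutes_def g h
      proof (simp, intro allI impI)
        fix x :: "nat \<Rightarrow> nat \<Rightarrow> 'a"
        assume x: "\<forall>i<l. \<forall>j<m. x i j \<in> A"
        define y where "y = (\<lambda>i j. if i < l then x i j else a)"
        have y: "\<forall>i<n. \<forall>j<m. y i j \<in> A" using x a unfolding y_def by auto
        have e1: "(\<lambda>i\<in>{..<l}. h' (\<lambda>j\<in>{..<m}. y i j)) = (\<lambda>i\<in>{..<l}. h' (\<lambda>j\<in>{..<m}. x i j))"
          by (rule restrict_ext) (simp add: y_def)
        have e2: "(\<lambda>j\<in>{..<m}. g' (\<lambda>i\<in>{..<l}. y i j)) = (\<lambda>j\<in>{..<m}. g' (\<lambda>i\<in>{..<l}. x i j))"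
          by (rule restrict_ext) (simp add: y_def cong: restrict_cong)
        from H y have "p (\<lambda>i\<in>{..<n}. h' (\<lambda>j\<in>{..<m}. y i j)) = h' (\<lambda>j\<in>{..<m}. p (\<lambda>i\<in>{..<n}. y i j))"
          unfolding commutes_def pg h by simp
        then show "g' (\<lambda>i\<in>{..<l}. h' (\<lambda>j\<in>{..<m}. x i j)) = h' (\<lambda>j\<in>{..<m}. g' (\<lambda>i\<in>{..<l}. x i j))"
          using key[OF y] e1 e2 by metis
      qed
    qed
  next
    assume H: "commutes A g h"
    show "commutes A (pad A n g) h" unfolding commutes_def pg h
    proof (simp, intro allI impI)
      fix x :: "nat \<Rightarrow> nat \<Rightarrow> 'a"
      assume x: "\<forall>i<n. \<forall>j<m. x i j \<in> A"
      then have "\<forall>i<l. \<forall>j<m. x i j \<in> A" using l by auto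
      with H have "g' (\<lambda>i\<in>{..<l}. h' (\<lambda>j\<in>{..<m}. x i j)) = h' (\<lambda>j\<in>{..<m}. g' (\<lambda>i\<in>{..<l}. x i j))"
        unfolding commutes_def g h by simp
      with key[OF x] show "p (\<lambda>i\<in>{..<n}. h' (\<lambda>j\<in>{..<m}. x i j)) = h' (\<lambda>j\<in>{..<m}. p (\<lambda>i\<in>{..<n}. x i j))"
        by simp
    qed
  qed
qed


theorem proposition2p1:
  fixes A :: "'a set" and n :: nat
  defines "a \<equiv> \<forall>F. centraliser_clone A F \<longrightarrow>
                 F = centraliser A (centraliser A (arity_part F n))"
      and "b \<equiv> \<forall>F. centraliser_clone A F \<longrightarrow>
                 centraliser A (arity_part F n) = centraliser A F"
      and "c \<equiv> \<forall>F. centraliser_clone A F \<longrightarrow>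
                 centraliser A (arity_part (centraliser A (arity_part F n)) n) = F"
      and "d \<equiv> \<forall>F. centraliser_clone A F \<longrightarrow>
                 (\<exists>G. G \<subseteq> (\<Union>l\<le>n. Ops_ar A l) \<and> F = centraliser A G)"
      and "e \<equiv> \<forall>F. centraliser_clone A F \<longrightarrow>
                 (\<exists>G. G \<subseteq> Ops_ar A n \<and> F = centraliser A G)"
      and "f \<equiv> \<forall>F. F \<subseteq> Ops A \<longrightarrow>
                 centraliser A (arity_part (centraliser A F) n) = centraliser A (centraliser A F)"
      and "g \<equiv> \<forall>F. centraliser_clone A F \<longrightarrow>
                 centraliser A (arity_part (centraliser A F) n) = F"
  shows "(a \<longleftrightarrow> b) \<and> (a \<longleftrightarrow> c) \<and> (a \<longleftrightarrow> d) \<and> (a \<longleftrightarrow> e)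
       \<and> (a \<longleftrightarrow> f) \<and> (a \<longleftrightarrow> g)"
proof -
  let ?C = "centraliser A"
  have apOps: "arity_part F n \<subseteq> Ops A" if "F \<subseteq> Ops A" for F
    using arity_part_sub that by blast
  have ab: "a \<longleftrightarrow> b"
  proof
    assume a
    show b unfolding b_def
    proof (intro allI impI)
      fix F assume F: "centraliser_clone A F"
      then have "F = ?C (?C (arity_part F n))" using \<open>a\<close> a_def by blast
      then have "?C F = ?C (?C (?C (arity_part F n)))" by simp
      also have "\<dots> = ?C (arity_part F n)"
        using centraliser3 apOps F unfolding centraliser_clone_def by blast
      finally show "?C (arity_part F n) = ?C F" by simp
    qed
  next
    assume b
    show a unfolding a_def
    proof (intro allI impI)
      fix F assume F: "centraliser_clone A F"
      then have "?C (arity_part F n) = ?C F" using \<open>b\<close> b_def by blast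
      then show "F = ?C (?C (arity_part F n))" using F unfolding centraliser_clone_def by simp
    qed
  qed
  have ag: "a \<Longrightarrow> g"
  proof -
    assume a
    show g unfolding g_def
    proof (intro allI impI)
      fix F assume F: "centraliser_clone A F"
      have "centraliser_clone A (?C F)" using F centraliser_clone_C unfolding centraliser_clone_def by blast
      then have "?C F = ?C (?C (arity_part (?C F) n))" using \<open>a\<close> a_def by blast
      then have "?C (?C F) = ?C (?C (?C (arity_part (?C F) n)))" by simp
      also have "\<dots> = ?C (arity_part (?C F) n)"
        using centraliser3 apOps centraliser_Ops by blast
      finally show "?C (arity_part (?C F) n) = F" using F unfolding centraliser_clone_def by simp
    qed
  qed
  have gb: "g \<Longrightarrow> b"
  proof -
    assume g
    show b unfolding b_def
    proof (intro allI impI)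
      fix F assume F: "centraliser_clone A F"
      have "centraliser_clone A (?C F)" using F centraliser_clone_C unfolding centraliser_clone_def by blast
      then have "?C (arity_part (?C (?C F)) n) = ?C F" using \<open>g\<close> g_def by blast
      then show "?C (arity_part F n) = ?C F" using F unfolding centraliser_clone_def by simp
    qed
  qed
  have gf: "g \<longleftrightarrow> f"
  proof
    assume g
    show f unfolding f_def
    proof (intro allI impI)
      fix F assume F: "F \<subseteq> Ops A"
      have "centraliser_clone A (?C (?C F))" using centraliser_clone_C centraliser_Ops by blast
      then have "?C (arity_part (?C (?C (?C F))) n) = ?C (?C F)" using \<open>g\<close> g_def by blast
      then show "?C (arity_part (?C F) n) = ?C (?C F)" using centraliser3[OF F] by simp
    qed
  next
    assume f
    show g unfolding g_def
    proof (intro allI impI)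
      fix F assume F: "centraliser_clone A F"
      then show "?C (arity_part (?C F) n) = F" using \<open>f\<close> f_def unfolding centraliser_clone_def by auto
    qed
  qed
  have ac: "a \<Longrightarrow> c"
  proof -
    assume a
    then have b g using ab ag by auto
    show c unfolding c_def
    proof (intro allI impI)
      fix F assume F: "centraliser_clone A F"
      then have "?C (arity_part F n) = ?C F" using \<open>b\<close> b_def by blast
      moreover have "?C (arity_part (?C F) n) = F" using \<open>g\<close> g_def F by blast
      ultimately show "?C (arity_part (?C (arity_part F n)) n) = F" by simp
    qed
  qed
  have ce: "c \<Longrightarrow> e"
  proof -
    assume c
    show e unfolding e_def
    proof (intro allI impI)
      fix F assume F: "centraliser_clone A F"
      then have "?C (arity_part (?C (arity_part F n)) n) = F" using \<open>c\<close> c_def by blast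
      moreover have "arity_part (?C (arity_part F n)) n \<subseteq> Ops_ar A n"
        using centraliser_Ops unfolding arity_part_def Ops_ar_def by blast
      ultimately show "\<exists>G. G \<subseteq> Ops_ar A n \<and> F = ?C G" by metis
    qed
  qed
  have ed: "e \<Longrightarrow> d"
  proof -
    assume e
    show d unfolding d_def
    proof (intro allI impI)
      fix F assume F: "centraliser_clone A F"
      then obtain G where "G \<subseteq> Ops_ar A n" "F = ?C G" using \<open>e\<close> e_def by blast
      then show "\<exists>G. G \<subseteq> (\<Union>l\<le>n. Ops_ar A l) \<and> F = ?C G" by blast
    qed
  qed
  have dg: "d \<Longrightarrow> g"
  proof -
    assume d
    show g unfolding g_def
    proof (intro allI impI)
      fix F assume F: "centraliser_clone A F"
      then obtain G where G: "G \<subseteq> (\<Union>l\<le>n. Ops_ar A l)" and FG: "F = ?C G" using \<open>d\<close> d_def by blast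
      have Gi: "x \<in> Ops A \<and> fst x \<le> n" if "x \<in> G" for x using G that unfolding Ops_ar_def by auto
      have FO: "F \<subseteq> Ops A" using F unfolding centraliser_clone_def by blast
      have s1: "pad A n ` G \<subseteq> arity_part (?C F) n"
      proof
        fix y assume "y \<in> pad A n ` G"
        then obtain x where x: "x \<in> G" "y = pad A n x" by blast
        have "commutes A y h" if h: "h \<in> F" for h
        proof -
          have "commutes A h x" using h x FG unfolding centraliser_def by blast
          then have "commutes A x h" using commutes_sym by metis
          then show ?thesis using pad_commutes[of x A n h] Gi[OF x(1)] h FO x by blast
        qed
        then show "y \<in> arity_part (?C F) n"
          using pad_Ops[of x A n] Gi[OF x(1)] x unfolding arity_part_def centraliser_def by blast
      qed
      have s2: "?C (pad A n ` G) \<subseteq> F"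
      proof
        fix y assume y: "y \<in> ?C (pad A n ` G)"
        have yO: "y \<in> Ops A" using y centraliser_Ops by blast
        have "commutes A y x" if x: "x \<in> G" for x
        proof -
          have "commutes A y (pad A n x)" using y x unfolding centraliser_def by blast
          then have "commutes A (pad A n x) y" using commutes_sym by metis
          then have "commutes A x y" using pad_commutes[of x A n y] Gi[OF x] yO by blast
          then show ?thesis using commutes_sym by metis
        qed
        then show "y \<in> F" using yO FG unfolding centraliser_def by blast
      qed
      have "?C (arity_part (?C F) n) \<subseteq> F"
        using centraliser_anti[OF s1] s2 by blast
      moreover have "?C (?C F) \<subseteq> ?C (arity_part (?C F) n)"
        using centraliser_anti arity_part_sub by blast
      ultimately show "?C (arity_part (?C F) n) = F" using F unfolding centraliser_clone_def by blast
    qed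
  qed
  show ?thesis using ab ag gb gf ac ce ed dg by blast
qed

end
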